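(* Let $(\mathfrak g,[\cdot,\cdot]_{\mathfrak g},E)$ be an ENL algebra and let $r\in\mathfrak g\otimes\mathfrak g$ be an EN $r$-matrix, i.e. $[\![r,r]\!]=0$ and $(\mathrm{Id}\otimes E-E\otimes\mathrm{Id})(r)=0$. Assume moreover that $(\mathrm{ad}_x\otimes\mathrm{Id}+\mathrm{Id}\otimes\mathrm{ad}_x)(r+r^{21})=0$ for all $x\in\mathfrak g$. Then the cobracket $\Delta_r(x)=(\mathrm{ad}_x\otimes\mathrm{Id}+\mathrm{Id}\otimes\mathrm{ad}_x)(r)$ endows $\mathfrak g$ with a coboundary ENL bialgebra structure: $(\mathfrak g,\Delta_r)$ is a Lie bialgebra and $\Delta_r\circ E=(E\otimes\mathrm{Id})\circ\Delta_r$ (equivalently, $E^*$ is an equivariant Nijenhuis operator on the Lie algebra $\mathfrak g^*$ whose bracket is dual to $\Delta_r$).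
   Context: All vector spaces are finite-dimensional over an algebraically closed field of characteristic zero. An ENL algebra is a Lie algebra with linear $E$ such that $E[x,y]=[x,Ey]$ for all $x,y$. For $r=\sum_i a_i\otimes b_i\in\mathfrak g\otimes\mathfrak g$, $r^{21}=\sum_i b_i\otimes a_i$, and $[\![r,r]\!]=[r_{12},r_{13}]+[r_{13},r_{23}]+[r_{12},r_{23}]$ computed in $U(\mathfrak g)^{\otimes3}$ with $r_{12}=\sum a_i\otimes b_i\otimes1$, $r_{13}=\sum a_i\otimes1\otimes b_i$, $r_{23}=\sum1\otimes a_i\otimes b_i$. A Lie bialgebra $(\mathfrak g,\Delta)$ is a Lie algebra with a coantisymmetric map $\Delta:\mathfrak g\to\mathfrak g\otimes\mathfrak g$ satisfying the co-Jacobi identity (so that the dual bracket $\langle[\alpha,\beta]_{\mathfrak g^*},x\rangle=\langle\alpha\otimes\beta,\Delta(x)\rangle$ is a Lie bracket on $\mathfrak g^*$) and the 1-cocycle condition $\Delta([x,y])=(\mathrm{ad}_x\otimes\mathrm{Id}+\mathrm{Id}\otimes\mathrm{ad}_x)\Delta(y)-(\mathrm{ad}_y\otimes\mathrm{Id}+\mathrm{Id}\otimes\mathrm{ad}_y)\Delta(x)$. An ENL bialgebra $(\mathfrak g,\Delta,E)$ is a Lie bialgebra such that $(\mathfrak g,E)$ and $(\mathfrak g^*,E^* )$ are ENL algebras; it is coboundary if $\Delta=\Delta_r$ for some $r\in\mathfrak g\otimes\mathfrak g$. *)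

theory Defs
  imports "HOL-Computational_Algebra.Polynomial"
begin

text \<open>Coordinates: g is identified with 'n => 'k via a fixed basis indexed by the
finite type 'n; g (x) g with 'n => 'n => 'k, g (x) g (x) g with 'n => 'n => 'n => 'k.
The dual space g* is identified with 'n => 'k via the pairing sum_i alpha_i x_i.\<close>

type_synonym ('n, 'k) vec = "'n \<Rightarrow> 'k"
type_synonym ('n, 'k) ten2 = "'n \<Rightarrow> 'n \<Rightarrow> 'k"
type_synonym ('n, 'k) ten3 = "'n \<Rightarrow> 'n \<Rightarrow> 'n \<Rightarrow> 'k"

definition alg_closed :: "'k::field itself \<Rightarrow> bool" where
  "alg_closed _ \<longleftrightarrow> (\<forall>p :: 'k poly. degree p \<ge> 1 \<longrightarrow> (\<exists>z. poly p z = 0))"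

definition vadd :: "('n, 'k::field) vec \<Rightarrow> ('n, 'k) vec \<Rightarrow> ('n, 'k) vec" where
  "vadd x y = (\<lambda>i. x i + y i)"

definition smul :: "'k::field \<Rightarrow> ('n, 'k) vec \<Rightarrow> ('n, 'k) vec" where
  "smul a x = (\<lambda>i. a * x i)"

definition unitv :: "'n \<Rightarrow> ('n, 'k::field) vec" where
  "unitv j = (\<lambda>i. if i = j then 1 else 0)"

definition lin :: "(('n, 'k::field) vec \<Rightarrow> ('m, 'k) vec) \<Rightarrow> bool" where
  "lin f \<longleftrightarrow> (\<forall>x y. f (vadd x y) = vadd (f x) (f y)) \<and> (\<forall>a x. f (smul a x) = smul a (f x))"

definition lin2 :: "(('n, 'k::field) vec \<Rightarrow> ('n, 'k) vec \<Rightarrow> ('n, 'k) vec) \<Rightarrow> bool" where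
  "lin2 B \<longleftrightarrow> (\<forall>x. lin (B x)) \<and> (\<forall>y. lin (\<lambda>x. B x y))"

definition is_lie :: "(('n::finite, 'k::field) vec \<Rightarrow> ('n, 'k) vec \<Rightarrow> ('n, 'k) vec) \<Rightarrow> bool" where
  "is_lie B \<longleftrightarrow> lin2 B \<and> (\<forall>x. B x x = (\<lambda>_. 0)) \<and>
     (\<forall>x y z. vadd (B x (B y z)) (vadd (B y (B z x)) (B z (B x y))) = (\<lambda>_. 0))"

definition is_enl :: "(('n::finite, 'k::field) vec \<Rightarrow> ('n, 'k) vec \<Rightarrow> ('n, 'k) vec)
    \<Rightarrow> (('n, 'k) vec \<Rightarrow> ('n, 'k) vec) \<Rightarrow> bool" where
  "is_enl B E \<longleftrightarrow> is_lie B \<and> lin E \<and> (\<forall>x y. E (B x y) = B x (E y))"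

text \<open>(A \<otimes> C)(t) for linear maps A, C on g.\<close>
definition tmap :: "(('n::finite, 'k::field) vec \<Rightarrow> ('n, 'k) vec) \<Rightarrow> (('n, 'k) vec \<Rightarrow> ('n, 'k) vec)
    \<Rightarrow> ('n, 'k) ten2 \<Rightarrow> ('n, 'k) ten2" where
  "tmap A C t = (\<lambda>i j. \<Sum>a\<in>UNIV. \<Sum>b\<in>UNIV. t a b * A (unitv a) i * C (unitv b) j)"

definition flip :: "('n, 'k) ten2 \<Rightarrow> ('n, 'k) ten2" where
  "flip r = (\<lambda>i j. r j i)"

definition tadd :: "('n, 'k::field) ten2 \<Rightarrow> ('n, 'k) ten2 \<Rightarrow> ('n, 'k) ten2" where
  "tadd s t = (\<lambda>i j. s i j + t i j)"

definition tsub :: "('n, 'k::field) ten2 \<Rightarrow> ('n, 'k) ten2 \<Rightarrow> ('n, 'k) ten2" where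
  "tsub s t = (\<lambda>i j. s i j - t i j)"

definition adact :: "(('n::finite, 'k::field) vec \<Rightarrow> ('n, 'k) vec \<Rightarrow> ('n, 'k) vec)
    \<Rightarrow> ('n, 'k) vec \<Rightarrow> ('n, 'k) ten2 \<Rightarrow> ('n, 'k) ten2" where
  "adact B x t = tadd (tmap (B x) id t) (tmap id (B x) t)"

definition cobr :: "(('n::finite, 'k::field) vec \<Rightarrow> ('n, 'k) vec \<Rightarrow> ('n, 'k) vec)
    \<Rightarrow> ('n, 'k) ten2 \<Rightarrow> ('n, 'k) vec \<Rightarrow> ('n, 'k) ten2" where
  "cobr B r x = adact B x r"

text \<open>Classical Yang-Baxter expression [[r,r]] = [r12,r13]+[r13,r23]+[r12,r23], which
for r = sum a_i (x) b_i equals sum [a_i,a_j](x)b_i(x)b_j + a_i(x)a_j(x)[b_i,b_j]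
+ a_i(x)[b_i,a_j](x)b_j in g(x)g(x)g (the commutators in U(g)^3 land there).
Written in coordinates with r = sum r_ab e_a (x) e_b.\<close>
definition cybe :: "(('n::finite, 'k::field) vec \<Rightarrow> ('n, 'k) vec \<Rightarrow> ('n, 'k) vec)
    \<Rightarrow> ('n, 'k) ten2 \<Rightarrow> ('n, 'k) ten3" where
  "cybe B r = (\<lambda>p q s.
      (\<Sum>a\<in>UNIV. \<Sum>a'\<in>UNIV. r a q * r a' s * B (unitv a) (unitv a') p)
    + (\<Sum>b\<in>UNIV. \<Sum>b'\<in>UNIV. r p b * r q b' * B (unitv b) (unitv b') s)
    + (\<Sum>b\<in>UNIV. \<Sum>a'\<in>UNIV. r p b * r a' s * B (unitv b) (unitv a') q))"

text \<open>Dual bracket on g*: <[alpha,beta], x> = <alpha (x) beta, Delta x>.\<close>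
definition dual_br :: "(('n::finite, 'k::field) vec \<Rightarrow> ('n, 'k) ten2)
    \<Rightarrow> ('n, 'k) vec \<Rightarrow> ('n, 'k) vec \<Rightarrow> ('n, 'k) vec" where
  "dual_br D \<alpha> \<beta> = (\<lambda>k. \<Sum>i\<in>UNIV. \<Sum>j\<in>UNIV. \<alpha> i * \<beta> j * D (unitv k) i j)"

definition dual_map :: "(('n::finite, 'k::field) vec \<Rightarrow> ('n, 'k) vec) \<Rightarrow> ('n, 'k) vec \<Rightarrow> ('n, 'k) vec" where
  "dual_map E \<alpha> = (\<lambda>k. \<Sum>i\<in>UNIV. \<alpha> i * E (unitv k) i)"

definition lin_ten :: "(('n::finite, 'k::field) vec \<Rightarrow> ('n, 'k) ten2) \<Rightarrow> bool" where
  "lin_ten D \<longleftrightarrow> (\<forall>x y. D (vadd x y) = tadd (D x) (D y)) \<and>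
                 (\<forall>a x. D (smul a x) = (\<lambda>i j. a * D x i j))"

definition lie_bialgebra :: "(('n::finite, 'k::field) vec \<Rightarrow> ('n, 'k) vec \<Rightarrow> ('n, 'k) vec)
    \<Rightarrow> (('n, 'k) vec \<Rightarrow> ('n, 'k) ten2) \<Rightarrow> bool" where
  "lie_bialgebra B D \<longleftrightarrow> is_lie B \<and> lin_ten D \<and>
     (\<forall>x. flip (D x) = (\<lambda>i j. - D x i j)) \<and>
     is_lie (dual_br D) \<and>
     (\<forall>x y. D (B x y) = tsub (adact B x (D y)) (adact B y (D x)))"

definition enl_bialgebra :: "(('n::finite, 'k::field) vec \<Rightarrow> ('n, 'k) vec \<Rightarrow> ('n, 'k) vec)
    \<Rightarrow> (('n, 'k) vec \<Rightarrow> ('n, 'k) ten2) \<Rightarrow> (('n, 'k) vec \<Rightarrow> ('n, 'k) vec) \<Rightarrow> bool" where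
  "enl_bialgebra B D E \<longleftrightarrow> lie_bialgebra B D \<and> is_enl B E \<and> is_enl (dual_br D) (dual_map E)"

end

theory Submission
  imports Defs
begin

definition pair :: "('n::finite, 'k::field) vec \<Rightarrow> ('n, 'k) vec \<Rightarrow> 'k" where
  "pair \<mu> y = (\<Sum>i\<in>UNIV. \<mu> i * y i)"

lemma pair_vadd[simp]: "pair \<mu> (vadd y z) = pair \<mu> y + pair \<mu> z"
  by (simp add: pair_def vadd_def distrib_left sum.distrib)
lemma pair_smul[simp]: "pair \<mu> (smul a y) = a * pair \<mu> y"
  by (simp add: pair_def smul_def sum_distrib_left mult_ac)
lemma pair_unit[simp]: "pair \<mu> (unitv k) = \<mu> k"
proof -
  have "(\<Sum>i\<in>UNIV. \<mu> i * (if i = k then 1 else 0)) = (\<Sum>i\<in>UNIV. if i = k then \<mu> i else 0)"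
    by (rule sum.cong) auto
  then show ?thesis by (simp add: pair_def unitv_def)
qed
lemma pair_unit_l[simp]: "pair (unitv k) y = y k"
proof -
  have "(\<Sum>i\<in>UNIV. (if i = k then 1 else 0) * y i) = (\<Sum>i\<in>UNIV. if i = k then y i else 0)"
    by (rule sum.cong) auto
  then show ?thesis by (simp add: pair_def unitv_def)
qed

lemma vec_ext: "(\<And>x. pair u x = pair v x) \<Longrightarrow> u = v"
  by (rule ext, metis pair_unit)

lemma vec_ext2: assumes "\<And>\<mu>. pair \<mu> u = pair \<mu> v" shows "u = v"
proof (rule ext)
  fix k show "u k = v k" using assms[of "unitv k"] by simp
qed

lemma lin_zero: "lin f \<Longrightarrow> f (\<lambda>_. 0) = (\<lambda>_. 0)"
proof -
  assume "lin f"
  then have "f (smul 0 (\<lambda>_. 0)) = smul 0 (f (\<lambda>_. 0))" by (simp add: lin_def)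
  then show ?thesis by (simp add: smul_def)
qed

lemma lin_expand_aux:
  assumes "lin f" and "finite A"
  shows "f (\<lambda>i. if i \<in> A then z i else 0) = (\<lambda>i. \<Sum>m\<in>A. z m * f (unitv m) i)"
  using assms(2)
proof (induction A rule: finite_induct)
  case empty
  then show ?case using lin_zero[OF assms(1)] by simp
next
  case (insert m A)
  have "(\<lambda>i. if i \<in> insert m A then z i else 0) = vadd (\<lambda>i. if i \<in> A then z i else 0) (smul (z m) (unitv m))"
    using insert(2) by (auto simp: vadd_def smul_def unitv_def)
  then have "f (\<lambda>i. if i \<in> insert m A then z i else 0) = vadd (f (\<lambda>i. if i \<in> A then z i else 0)) (smul (z m) (f (unitv m)))"
    using assms(1) by (simp add: lin_def)
  then show ?case using insert by (simp add: vadd_def smul_def add.commute)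
qed

lemma lin_expand: "lin (f :: ('n::finite, 'k::field) vec \<Rightarrow> ('m, 'k) vec) \<Longrightarrow> f z = (\<lambda>i. \<Sum>m\<in>UNIV. z m * f (unitv m) i)"
  using lin_expand_aux[of f UNIV z] by simp

lemma pair_lin: "lin (f :: ('n::finite, 'k::field) vec \<Rightarrow> ('m::finite, 'k) vec) \<Longrightarrow> pair \<mu> (f z) = (\<Sum>m\<in>UNIV. z m * pair \<mu> (f (unitv m)))"
  apply (subst lin_expand, assumption)
  apply (simp add: pair_def sum_distrib_left)
  apply (subst sum.swap)
  apply (simp add: mult_ac)
  done

lemma pair_zero[simp]: "pair \<mu> (\<lambda>_. 0) = 0" by (simp add: pair_def)

lemma swap4: "(\<Sum>i\<in>A. \<Sum>j\<in>B. \<Sum>a\<in>C. \<Sum>b\<in>D. f i j a b) = (\<Sum>a\<in>C. \<Sum>b\<in>D. \<Sum>i\<in>A. \<Sum>j\<in>B. f i j a b)"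
proof -
  have "(\<Sum>i\<in>A. \<Sum>j\<in>B. \<Sum>a\<in>C. \<Sum>b\<in>D. f i j a b) = (\<Sum>i\<in>A. \<Sum>a\<in>C. \<Sum>j\<in>B. \<Sum>b\<in>D. f i j a b)"
    by (rule sum.cong[OF refl], rule sum.swap)
  also have "\<dots> = (\<Sum>i\<in>A. \<Sum>a\<in>C. \<Sum>b\<in>D. \<Sum>j\<in>B. f i j a b)"
    by (rule sum.cong[OF refl], rule sum.cong[OF refl], rule sum.swap)
  also have "\<dots> = (\<Sum>a\<in>C. \<Sum>i\<in>A. \<Sum>b\<in>D. \<Sum>j\<in>B. f i j a b)"
    by (rule sum.swap)
  also have "\<dots> = (\<Sum>a\<in>C. \<Sum>b\<in>D. \<Sum>i\<in>A. \<Sum>j\<in>B. f i j a b)"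
    by (rule sum.cong[OF refl], rule sum.swap)
  finally show ?thesis .
qed

section \<open>Lie algebra facts\<close>

lemma lie_lin_r: "is_lie B \<Longrightarrow> lin (B x)" by (simp add: is_lie_def lin2_def)
lemma lie_lin_l: "is_lie B \<Longrightarrow> lin (\<lambda>x. B x y)" by (simp add: is_lie_def lin2_def)

lemma B_vadd_r[simp]: "is_lie B \<Longrightarrow> B x (vadd y z) = vadd (B x y) (B x z)"
  using lie_lin_r[of B x] by (simp add: lin_def)
lemma B_smul_r[simp]: "is_lie B \<Longrightarrow> B x (smul a y) = smul a (B x y)"
  using lie_lin_r[of B x] by (simp add: lin_def)
lemma B_vadd_l[simp]: "is_lie B \<Longrightarrow> B (vadd x y) z = vadd (B x z) (B y z)"
  using lie_lin_l[of B z] by (simp add: lin_def)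
lemma B_smul_l[simp]: "is_lie B \<Longrightarrow> B (smul a x) z = smul a (B x z)"
  using lie_lin_l[of B z] by (simp add: lin_def)

lemma pair_anti: "is_lie B \<Longrightarrow> pair \<mu> (B y x) = - pair \<mu> (B x y)"
proof -
  assume L: "is_lie B"
  have "B (vadd x y) (vadd x y) = (\<lambda>_. 0)" "B x x = (\<lambda>_. 0)" "B y y = (\<lambda>_. 0)"
    using L unfolding is_lie_def by blast+
  then have "pair \<mu> (B (vadd x y) (vadd x y)) = 0" "pair \<mu> (B x x) = 0" "pair \<mu> (B y y) = 0" by simp_all
  moreover have "pair \<mu> (B (vadd x y) (vadd x y)) = pair \<mu> (B x x) + pair \<mu> (B x y) + (pair \<mu> (B y x) + pair \<mu> (B y y))"
    using L by simp
  ultimately have "pair \<mu> (B x y) + pair \<mu> (B y x) = 0" by simp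
  then show ?thesis by (simp add: eq_neg_iff_add_eq_0 add.commute)
qed

lemma pair_jacobi: "is_lie B \<Longrightarrow> pair \<mu> (B x (B y z)) + pair \<mu> (B y (B z x)) + pair \<mu> (B z (B x y)) = 0"
proof -
  assume L: "is_lie B"
  then have "vadd (B x (B y z)) (vadd (B y (B z x)) (B z (B x y))) = (\<lambda>_. 0)" unfolding is_lie_def by blast
  then have "pair \<mu> (vadd (B x (B y z)) (vadd (B y (B z x)) (B z (B x y)))) = 0" by simp
  then show ?thesis by (simp add: add.assoc)
qed

lemma pair_B_l: "is_lie B \<Longrightarrow> pair \<mu> (B x w) = (\<Sum>k\<in>UNIV. x k * pair \<mu> (B (unitv k) w))"
  using pair_lin[OF lie_lin_l[of B w], of \<mu> x] by simp

definition cx :: "(('n::finite, 'k::field) vec \<Rightarrow> ('n, 'k) vec \<Rightarrow> ('n, 'k) vec) \<Rightarrow> ('n, 'k) vec \<Rightarrow> ('n, 'k) vec \<Rightarrow> ('n, 'k) vec" where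
  "cx B \<mu> y = (\<lambda>a. pair \<mu> (B y (unitv a)))"

lemma pair_cx[simp]: "is_lie B \<Longrightarrow> pair (cx B \<mu> y) z = pair \<mu> (B y z)"
  using pair_lin[OF lie_lin_r[of B y], of \<mu> z] by (simp add: cx_def pair_def mult.commute)

section \<open>Tensors\<close>

definition tpr :: "('n::finite, 'k::field) vec \<Rightarrow> ('n, 'k) vec \<Rightarrow> ('n, 'k) ten2 \<Rightarrow> 'k" where
  "tpr \<alpha> \<beta> t = (\<Sum>i\<in>UNIV. \<Sum>j\<in>UNIV. \<alpha> i * \<beta> j * t i j)"

lemma tpr_unit: "tpr (unitv i) (unitv j) t = t i j"
proof -
  have "tpr (unitv i) (unitv j) t = pair (unitv i) (\<lambda>a. pair (unitv j) (t a))"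
    unfolding tpr_def pair_def by (simp add: sum_distrib_left mult_ac)
  then show ?thesis by simp
qed

lemma ten_ext: "(\<And>\<alpha> \<beta>. tpr \<alpha> \<beta> s = tpr \<alpha> \<beta> t) \<Longrightarrow> s = t"
  by (intro ext, metis tpr_unit)

lemma tpr_tadd[simp]: "tpr \<alpha> \<beta> (tadd s t) = tpr \<alpha> \<beta> s + tpr \<alpha> \<beta> t"
  by (simp add: tpr_def tadd_def distrib_left sum.distrib)
lemma tpr_tsub[simp]: "tpr \<alpha> \<beta> (tsub s t) = tpr \<alpha> \<beta> s - tpr \<alpha> \<beta> t"
  by (simp add: tpr_def tsub_def right_diff_distrib sum_subtractf)
lemma tpr_neg[simp]: "tpr \<alpha> \<beta> (\<lambda>i j. - t i j) = - tpr \<alpha> \<beta> t"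
  by (simp add: tpr_def sum_negf)
lemma tpr_scal[simp]: "tpr \<alpha> \<beta> (\<lambda>i j. a * t i j) = a * tpr \<alpha> \<beta> t"
  by (simp add: tpr_def sum_distrib_left mult_ac)
lemma tpr_zero[simp]: "tpr \<alpha> \<beta> (\<lambda>_ _. 0) = 0"
  by (simp add: tpr_def)
lemma tpr_flip: "tpr \<alpha> \<beta> (flip t) = tpr \<beta> \<alpha> t"
  unfolding tpr_def flip_def by (subst sum.swap) (simp add: mult_ac)

lemma tpr_tmap: "tpr \<alpha> \<beta> (tmap A C t) = tpr (\<lambda>a. pair \<alpha> (A (unitv a))) (\<lambda>b. pair \<beta> (C (unitv b))) t"
  unfolding tpr_def tmap_def pair_def
  apply (simp only: sum_distrib_left sum_distrib_right)
  apply (subst swap4)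
  apply (rule sum.cong[OF refl], rule sum.cong[OF refl], subst sum.swap)
  apply (simp add: mult_ac)
  done

lemma tpr_pair: "tpr \<alpha> \<beta> t = pair \<alpha> (\<lambda>i. pair \<beta> (t i))"
  by (simp add: tpr_def pair_def sum_distrib_left mult_ac)

definition Pm :: "('n::finite, 'k::field) ten2 \<Rightarrow> ('n, 'k) vec \<Rightarrow> ('n, 'k) vec" where
  "Pm r \<alpha> = (\<lambda>b. \<Sum>a\<in>UNIV. r a b * \<alpha> a)"
definition Qm :: "('n::finite, 'k::field) ten2 \<Rightarrow> ('n, 'k) vec \<Rightarrow> ('n, 'k) vec" where
  "Qm r \<beta> = (\<lambda>a. \<Sum>b\<in>UNIV. r a b * \<beta> b)"

lemma tpr_Q: "tpr \<alpha> \<beta> r = pair \<alpha> (Qm r \<beta>)"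
  by (simp add: tpr_def pair_def Qm_def sum_distrib_left mult_ac)
lemma tpr_P: "tpr \<alpha> \<beta> r = pair \<beta> (Pm r \<alpha>)"
  unfolding tpr_def pair_def Pm_def by (subst sum.swap) (simp add: sum_distrib_left mult_ac)
lemma PQ: "pair \<beta> (Pm r \<alpha>) = pair \<alpha> (Qm r \<beta>)"
  using tpr_P tpr_Q by metis

lemma tpr_adact: "is_lie B \<Longrightarrow> tpr \<alpha> \<beta> (adact B x t) = tpr (cx B \<alpha> x) \<beta> t + tpr \<alpha> (cx B \<beta> x) t"
  unfolding adact_def by (simp add: tpr_tmap cx_def)

lemma tpr_cobr: "is_lie B \<Longrightarrow> tpr \<alpha> \<beta> (cobr B r x) = pair \<alpha> (B x (Qm r \<beta>)) + pair \<beta> (B x (Pm r \<alpha>))"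
  unfolding cobr_def by (simp add: tpr_adact tpr_Q[of "cx B \<alpha> x"] tpr_P[of _ "cx B \<beta> x"])

lemma pair_db: "is_lie B \<Longrightarrow> pair (dual_br (cobr B r) \<alpha> \<beta>) x = pair \<alpha> (B x (Qm r \<beta>)) + pair \<beta> (B x (Pm r \<alpha>))"
proof -
  assume L: "is_lie B"
  have "pair (dual_br (cobr B r) \<alpha> \<beta>) x = (\<Sum>k\<in>UNIV. (pair \<alpha> (B (unitv k) (Qm r \<beta>)) + pair \<beta> (B (unitv k) (Pm r \<alpha>))) * x k)"
    using tpr_cobr[OF L] by (simp add: pair_def dual_br_def tpr_def)
  also have "\<dots> = pair \<alpha> (B x (Qm r \<beta>)) + pair \<beta> (B x (Pm r \<alpha>))"
    by (simp add: pair_B_l[OF L, of _ x] distrib_left sum.distrib mult_ac)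
  finally show ?thesis .
qed

lemma db_unit: "is_lie B \<Longrightarrow> dual_br (cobr B r) \<alpha> \<beta> k = pair \<alpha> (B (unitv k) (Qm r \<beta>)) + pair \<beta> (B (unitv k) (Pm r \<alpha>))"
  using pair_db[of B r \<alpha> \<beta> "unitv k"] by simp

lemma Pm_vadd[simp]: "Pm r (vadd x y) = vadd (Pm r x) (Pm r y)"
  by (simp add: Pm_def vadd_def distrib_left sum.distrib)
lemma Qm_vadd[simp]: "Qm r (vadd x y) = vadd (Qm r x) (Qm r y)"
  by (simp add: Qm_def vadd_def distrib_left sum.distrib)
lemma Pm_smul[simp]: "Pm r (smul a x) = smul a (Pm r x)"
  by (simp add: Pm_def smul_def sum_distrib_left mult_ac)
lemma Qm_smul[simp]: "Qm r (smul a x) = smul a (Qm r x)"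
  by (simp add: Qm_def smul_def sum_distrib_left mult_ac)

lemma pair_vadd_l[simp]: "pair (vadd \<mu> \<nu>) y = pair \<mu> y + pair \<nu> y"
  by (simp add: pair_def vadd_def distrib_right sum.distrib)
lemma pair_smul_l[simp]: "pair (smul a \<mu>) y = a * pair \<mu> y"
  by (simp add: pair_def smul_def sum_distrib_left mult_ac)

section \<open>CYBE in pairing form\<close>

definition tpr3 :: "('n::finite, 'k::field) vec \<Rightarrow> ('n, 'k) vec \<Rightarrow> ('n, 'k) vec \<Rightarrow> ('n, 'k) ten3 \<Rightarrow> 'k" where
  "tpr3 \<alpha> \<beta> \<gamma> Y = (\<Sum>p\<in>UNIV. \<Sum>q\<in>UNIV. \<Sum>s\<in>UNIV. \<alpha> p * \<beta> q * \<gamma> s * Y p q s)"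

lemma tpr3_1: "tpr3 \<alpha> \<beta> \<gamma> Y = pair \<alpha> (\<lambda>p. tpr \<beta> \<gamma> (Y p))"
  by (simp add: tpr3_def tpr_def pair_def sum_distrib_left mult_ac)
lemma sw3_312: "(\<Sum>p\<in>A. \<Sum>q\<in>B. \<Sum>s\<in>C. f p q s) = (\<Sum>s\<in>C. \<Sum>p\<in>A. \<Sum>q\<in>B. f p q s)"
proof -
  have "(\<Sum>p\<in>A. \<Sum>q\<in>B. \<Sum>s\<in>C. f p q s) = (\<Sum>p\<in>A. \<Sum>s\<in>C. \<Sum>q\<in>B. f p q s)"
    by (rule sum.cong[OF refl], rule sum.swap)
  also have "\<dots> = (\<Sum>s\<in>C. \<Sum>p\<in>A. \<Sum>q\<in>B. f p q s)" by (rule sum.swap)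
  finally show ?thesis .
qed
lemma sw3_213: "(\<Sum>p\<in>A. \<Sum>q\<in>B. \<Sum>s\<in>C. f p q s) = (\<Sum>q\<in>B. \<Sum>p\<in>A. \<Sum>s\<in>C. f p q s)"
  by (rule sum.swap)

lemma tpr3_3: "tpr3 \<alpha> \<beta> \<gamma> Y = pair \<gamma> (\<lambda>s. tpr \<alpha> \<beta> (\<lambda>p q. Y p q s))"
  unfolding tpr3_def
  apply (subst sw3_312)
  apply (simp add: tpr_def pair_def sum_distrib_left mult_ac)
  done
lemma tpr3_2: "tpr3 \<alpha> \<beta> \<gamma> Y = pair \<beta> (\<lambda>q. tpr \<alpha> \<gamma> (\<lambda>p s. Y p q s))"
  unfolding tpr3_def
  apply (subst sw3_213)
  apply (simp add: tpr_def pair_def sum_distrib_left mult_ac)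
  done

lemma tpr3_add: "tpr3 \<alpha> \<beta> \<gamma> (\<lambda>p q s. X p q s + Y p q s + Z p q s) = tpr3 \<alpha> \<beta> \<gamma> X + tpr3 \<alpha> \<beta> \<gamma> Y + tpr3 \<alpha> \<beta> \<gamma> Z"
  by (simp add: tpr3_def distrib_left sum.distrib)

lemma tpr_G: "tpr \<mu> \<nu> (\<lambda>p q. \<Sum>a\<in>UNIV. \<Sum>b\<in>UNIV. F a p * G b q * h a b)
   = (\<Sum>a\<in>UNIV. \<Sum>b\<in>UNIV. (\<Sum>p\<in>UNIV. F a p * \<mu> p) * (\<Sum>q\<in>UNIV. G b q * \<nu> q) * h a b)"
  unfolding tpr_def
  apply (simp only: sum_distrib_left sum_distrib_right)
  apply (subst swap4)
  apply (rule sum.cong[OF refl], rule sum.cong[OF refl], subst sum.swap)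
  apply (simp add: mult_ac)
  done

lemma B_expand2: "is_lie B \<Longrightarrow> B u v p = (\<Sum>a\<in>UNIV. \<Sum>b\<in>UNIV. u a * v b * B (unitv a) (unitv b) p)"
proof -
  assume L: "is_lie B"
  have "B u v p = (\<Sum>a\<in>UNIV. u a * B (unitv a) v p)"
    by (subst lin_expand[OF lie_lin_l[OF L]]) simp
  also have "\<dots> = (\<Sum>a\<in>UNIV. \<Sum>b\<in>UNIV. u a * v b * B (unitv a) (unitv b) p)"
    by (subst lin_expand[OF lie_lin_r[OF L], of "unitv _" v]) (simp add: sum_distrib_left mult_ac)
  finally show ?thesis .
qed

lemma B_expand2': "is_lie B \<Longrightarrow> B u v = (\<lambda>p. \<Sum>a\<in>UNIV. \<Sum>b\<in>UNIV. u a * v b * B (unitv a) (unitv b) p)"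
  using B_expand2 by blast

lemma cyb: assumes L: "is_lie B" and C: "cybe B r = (\<lambda>_ _ _. 0)"
  shows "pair \<alpha> (B (Qm r \<beta>) (Qm r \<gamma>)) + pair \<beta> (B (Pm r \<alpha>) (Qm r \<gamma>)) + pair \<gamma> (B (Pm r \<alpha>) (Pm r \<beta>)) = 0"
proof -
  let ?c = "\<lambda>a b p. B (unitv a) (unitv b) p"
  have 0: "tpr3 \<alpha> \<beta> \<gamma> (cybe B r) = 0" using C by (simp add: tpr3_def)
  have 1: "tpr3 \<alpha> \<beta> \<gamma> (\<lambda>p q s. \<Sum>a\<in>UNIV. \<Sum>a'\<in>UNIV. r a q * r a' s * ?c a a' p) = pair \<alpha> (B (Qm r \<beta>) (Qm r \<gamma>))"
    unfolding tpr3_1 tpr_G B_expand2'[OF L, of "Qm r \<beta>"] by (simp add: Qm_def mult_ac)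
  have 2: "tpr3 \<alpha> \<beta> \<gamma> (\<lambda>p q s. \<Sum>b\<in>UNIV. \<Sum>b'\<in>UNIV. r p b * r q b' * ?c b b' s) = pair \<gamma> (B (Pm r \<alpha>) (Pm r \<beta>))"
    unfolding tpr3_3 tpr_G B_expand2'[OF L, of "Pm r \<alpha>"] by (simp add: Pm_def mult_ac)
  have 3: "tpr3 \<alpha> \<beta> \<gamma> (\<lambda>p q s. \<Sum>b\<in>UNIV. \<Sum>a'\<in>UNIV. r p b * r a' s * ?c b a' q) = pair \<beta> (B (Pm r \<alpha>) (Qm r \<gamma>))"
    unfolding tpr3_2 tpr_G B_expand2'[OF L, of "Pm r \<alpha>"] by (simp add: Pm_def Qm_def mult_ac)
  have "tpr3 \<alpha> \<beta> \<gamma> (cybe B r) = pair \<alpha> (B (Qm r \<beta>) (Qm r \<gamma>)) + pair \<gamma> (B (Pm r \<alpha>) (Pm r \<beta>)) + pair \<beta> (B (Pm r \<alpha>) (Qm r \<gamma>))"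
    unfolding cybe_def tpr3_add 1 2 3 ..
  then show ?thesis using 0 by (simp add: ac_simps)
qed

section \<open>Invariance\<close>

definition sv :: "('n::finite, 'k::field) ten2 \<Rightarrow> ('n, 'k) vec \<Rightarrow> ('n, 'k) vec" where
  "sv r \<mu> = vadd (Pm r \<mu>) (Qm r \<mu>)"

lemma B_anti_vec: "is_lie B \<Longrightarrow> B v u = smul (-1) (B u v)"
proof (rule vec_ext2)
  fix \<mu> assume "is_lie B"
  then show "pair \<mu> (B v u) = pair \<mu> (smul (-1) (B u v))" using pair_anti[of B \<mu> v u] by simp
qed

lemma anti_in: "is_lie B \<Longrightarrow> pair \<mu> (B y (B u v)) = - pair \<mu> (B y (B v u))"
  using B_anti_vec[of B u v] by simp
lemma anti_out: "is_lie B \<Longrightarrow> pair \<mu> (B (B u v) w) = - pair \<mu> (B (B v u) w)"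
  using B_anti_vec[of B u v] by simp

lemma inv0:
  assumes L: "is_lie B" and H: "\<forall>x. adact B x (tadd r (flip r)) = (\<lambda>_ _. 0)"
  shows "pair \<alpha> (B x (sv r \<beta>)) + pair \<beta> (B x (sv r \<alpha>)) = 0"
proof -
  have "tpr \<alpha> \<beta> (adact B x (tadd r (flip r))) = 0" using H by simp
  then have "tpr (cx B \<alpha> x) \<beta> r + tpr \<beta> (cx B \<alpha> x) r + (tpr \<alpha> (cx B \<beta> x) r + tpr (cx B \<beta> x) \<alpha> r) = 0"
    by (simp add: tpr_adact[OF L] tpr_flip)
  moreover have "tpr (cx B \<alpha> x) \<beta> r = pair \<alpha> (B x (Qm r \<beta>))" using L by (simp add: tpr_Q)
  moreover have "tpr \<beta> (cx B \<alpha> x) r = pair \<alpha> (B x (Pm r \<beta>))" using L by (simp add: tpr_P)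
  moreover have "tpr \<alpha> (cx B \<beta> x) r = pair \<beta> (B x (Pm r \<alpha>))" using L by (simp add: tpr_P)
  moreover have "tpr (cx B \<beta> x) \<alpha> r = pair \<beta> (B x (Qm r \<alpha>))" using L by (simp add: tpr_Q)
  ultimately show ?thesis using L by (simp add: sv_def ac_simps)
qed

lemma inv1:
  assumes L: "is_lie B" and H: "\<forall>x. adact B x (tadd r (flip r)) = (\<lambda>_ _. 0)"
  shows "pair \<alpha> (B x (sv r \<beta>)) = - pair \<beta> (B x (sv r \<alpha>))"
  using inv0[OF L H] by (simp add: eq_neg_iff_add_eq_0)

lemma S_sym: "pair \<nu> (sv r \<mu>) = pair \<mu> (sv r \<nu>)"
  by (simp add: sv_def PQ add.commute)

lemma inv2:
  assumes L: "is_lie B" and H: "\<forall>x. adact B x (tadd r (flip r)) = (\<lambda>_ _. 0)"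
  shows "pair \<mu> (B z (B y (sv r \<nu>))) = pair \<nu> (B y (B z (sv r \<mu>)))"
proof -
  have "pair \<mu> (B z (B y (sv r \<nu>))) = pair (cx B \<mu> z) (B y (sv r \<nu>))" using L by simp
  also have "\<dots> = - pair \<nu> (B y (sv r (cx B \<mu> z)))" by (rule inv1[OF L H])
  also have "\<dots> = - pair (cx B \<nu> y) (sv r (cx B \<mu> z))" using L by simp
  also have "\<dots> = - pair (cx B \<mu> z) (sv r (cx B \<nu> y))" by (simp add: S_sym)
  also have "\<dots> = - pair \<mu> (B z (sv r (cx B \<nu> y)))" using L by simp
  also have "\<dots> = pair (cx B \<nu> y) (B z (sv r \<mu>))" using inv1[OF L H, of \<mu> z "cx B \<nu> y"] by simp
  also have "\<dots> = pair \<nu> (B y (B z (sv r \<mu>)))" using L by simp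
  finally show ?thesis .
qed

lemma elim3: "(a::'a::ab_group_add) + b + c = 0 \<Longrightarrow> a = - b - c"
proof -
  assume h: "a + b + c = 0"
  have "a = (a + b + c) - b - c" by (simp add: algebra_simps)
  then show ?thesis using h by simp
qed

lemma PP:
  assumes L: "is_lie B"
  shows "pair \<mu> (B x (B u v)) + pair \<mu> (B (B x v) u) - pair \<mu> (B (B x u) v) = 0"
proof -
  have j: "pair \<mu> (B x (B u v)) + pair \<mu> (B u (B v x)) + pair \<mu> (B v (B x u)) = 0" by (rule pair_jacobi[OF L])
  have "pair \<mu> (B u (B v x)) = pair \<mu> (B (B x v) u)"
    using pair_anti[OF L, of \<mu> u "B v x"] anti_out[OF L, of \<mu> v x u] by simp
  moreover have "pair \<mu> (B v (B x u)) = - pair \<mu> (B (B x u) v)"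
    using pair_anti[OF L, of \<mu> v "B x u"] by simp
  ultimately show ?thesis using j by simp
qed

lemma PS:
  assumes L: "is_lie B" and H: "\<forall>x. adact B x (tadd r (flip r)) = (\<lambda>_ _. 0)"
  shows "pair \<mu> (B x (B (sv r \<nu>) y)) + pair \<mu> (B (B x y) (sv r \<nu>)) + pair \<nu> (B x (B y (sv r \<mu>))) = 0"
proof -
  let ?s\<mu> = "sv r \<mu>" and ?s\<nu> = "sv r \<nu>"
  have 1: "pair \<mu> (B (B x y) ?s\<nu>) = - pair \<nu> (B (B x y) ?s\<mu>)" by (rule inv1[OF L H])
  have 2: "pair \<mu> (B x (B ?s\<nu> y)) = - pair \<nu> (B y (B x ?s\<mu>))"
    using anti_in[OF L, of \<mu> x ?s\<nu> y] inv2[OF L H, of \<mu> x y \<nu>] by simp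
  have j: "pair \<nu> (B x (B y ?s\<mu>)) + pair \<nu> (B y (B ?s\<mu> x)) + pair \<nu> (B ?s\<mu> (B x y)) = 0"
    by (rule pair_jacobi[OF L])
  have 3: "pair \<nu> (B y (B ?s\<mu> x)) = - pair \<nu> (B y (B x ?s\<mu>))" by (rule anti_in[OF L])
  have 4: "pair \<nu> (B ?s\<mu> (B x y)) = - pair \<nu> (B (B x y) ?s\<mu>)" by (rule pair_anti[OF L])
  show ?thesis by (simp only: 2 1 elim3[OF j] 3 4) (simp add: algebra_simps)
qed

lemma SSS:
  assumes L: "is_lie B" and H: "\<forall>x. adact B x (tadd r (flip r)) = (\<lambda>_ _. 0)"
  shows "pair \<alpha> (B x (B (sv r \<beta>) (sv r \<gamma>))) + pair \<beta> (B x (B (sv r \<gamma>) (sv r \<alpha>))) + pair \<gamma> (B x (B (sv r \<alpha>) (sv r \<beta>))) = 0"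
proof -
  let ?a = "sv r \<alpha>" and ?b = "sv r \<beta>" and ?c = "sv r \<gamma>"
  have A: "pair \<alpha> (B x (B ?b ?c)) = pair \<beta> (B (B x ?a) ?c)"
    using inv2[OF L H, of \<alpha> x ?b \<gamma>] pair_anti[OF L, of \<gamma> ?b "B x ?a"] inv1[OF L H, of \<gamma> "B x ?a" \<beta>] by simp
  have C: "pair \<gamma> (B x (B ?a ?b)) = - pair \<beta> (B (B x ?c) ?a)"
    using inv2[OF L H, of \<gamma> x ?a \<beta>] pair_anti[OF L, of \<beta> ?a "B x ?c"] by simp
  have j: "pair \<beta> (B x (B ?c ?a)) + pair \<beta> (B ?c (B ?a x)) + pair \<beta> (B ?a (B x ?c)) = 0"
    by (rule pair_jacobi[OF L])
  have j1: "pair \<beta> (B ?c (B ?a x)) = pair \<beta> (B (B x ?a) ?c)"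
    using pair_anti[OF L, of \<beta> ?c "B ?a x"] anti_out[OF L, of \<beta> ?a x ?c] by simp
  have j2: "pair \<beta> (B ?a (B x ?c)) = - pair \<beta> (B (B x ?c) ?a)"
    by (rule pair_anti[OF L])
  show ?thesis by (simp only: A C elim3[OF j] j1 j2) (simp add: algebra_simps)
qed

lemma Qexp: "Qm r \<beta> = vadd (sv r \<beta>) (smul (-1) (Pm r \<beta>))"
  by (simp add: sv_def vadd_def smul_def)

lemma star_eq:
  assumes L: "is_lie B"
  shows "(- pair \<alpha> (B x (B (Qm r \<beta>) (Qm r \<gamma>))) + pair \<beta> (B (B x (Pm r \<alpha>)) (Qm r \<gamma>)) + pair \<gamma> (B (B x (Pm r \<alpha>)) (Pm r \<beta>))) + (- pair \<beta> (B x (B (Qm r \<gamma>) (Qm r \<alpha>))) + pair \<gamma> (B (B x (Pm r \<beta>)) (Qm r \<alpha>)) + pair \<alpha> (B (B x (Pm r \<beta>)) (Pm r \<gamma>))) + (- pair \<gamma> (B x (B (Qm r \<alpha>) (Qm r \<beta>))) + pair \<alpha> (B (B x (Pm r \<gamma>)) (Qm r \<beta>)) + pair \<beta> (B (B x (Pm r \<gamma>)) (Pm r \<alpha>))) = (pair \<alpha> (B x (B (sv r \<beta>) (Pm r \<gamma>))) + pair \<alpha> (B (B x (Pm r \<gamma>)) (sv r \<beta>)) + pair \<beta> (B x (B (Pm r \<gamma>) (sv r \<alpha>)))) + (pair \<beta> (B x (B (sv r \<gamma>) (Pm r \<alpha>))) + pair \<beta> (B (B x (Pm r \<alpha>)) (sv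 r \<gamma>)) + pair \<gamma> (B x (B (Pm r \<alpha>) (sv r \<beta>)))) + (pair \<gamma> (B x (B (sv r \<alpha>) (Pm r \<beta>))) + pair \<gamma> (B (B x (Pm r \<beta>)) (sv r \<alpha>)) + pair \<alpha> (B x (B (Pm r \<beta>) (sv r \<gamma>)))) - (pair \<alpha> (B x (B (Pm r \<beta>) (Pm r \<gamma>))) + pair \<alpha> (B (B x (Pm r \<gamma>)) (Pm r \<beta>)) - pair \<alpha> (B (B x (Pm r \<beta>)) (Pm r \<gamma>))) - (pair \<beta> (B x (B (Pm r \<gamma>) (Pm r \<alpha>))) + pair \<beta> (B (B x (Pm r \<alpha>)) (Pm r \<gamma>)) - pair \<beta> (B (B x (Pm r \<gamma>)) (Pm r \<alpha>))) - (pair \<gamma> (B x (B (Pm r \<alpha>) (Pm r \<beta>))) + pair \<gamma> (B (B x (Pm r \<beta>)) (Pm r \<alpha>)) - pair \<gamma> (B (B x (Pm r \<alpha>)) (Pm r \<beta>))) - (pair \<alpha> (B x (B (sv r \<beta>) (sv r \<gamma>))) + pair \<beta> (B x (B (sv r \<gamma>) (sv r \<alpha>))) + pair \<gamma> (B x (B (sv r \<alpha>) (sv r \<beta>))))"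
  by (simp add: Qexp[of r] L algebra_simps)

lemma star:
  assumes L: "is_lie B" and H: "\<forall>x. adact B x (tadd r (flip r)) = (\<lambda>_ _. 0)"
  shows "(- pair \<alpha> (B x (B (Qm r \<beta>) (Qm r \<gamma>))) + pair \<beta> (B (B x (Pm r \<alpha>)) (Qm r \<gamma>)) + pair \<gamma> (B (B x (Pm r \<alpha>)) (Pm r \<beta>))) + (- pair \<beta> (B x (B (Qm r \<gamma>) (Qm r \<alpha>))) + pair \<gamma> (B (B x (Pm r \<beta>)) (Qm r \<alpha>)) + pair \<alpha> (B (B x (Pm r \<beta>)) (Pm r \<gamma>))) + (- pair \<gamma> (B x (B (Qm r \<alpha>) (Qm r \<beta>))) + pair \<alpha> (B (B x (Pm r \<gamma>)) (Qm r \<beta>)) + pair \<beta> (B (B x (Pm r \<gamma>)) (Pm r \<alpha>))) = 0"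
  unfolding star_eq[OF L]
  using PS[OF L H, of \<alpha> x \<beta> "(Pm r \<gamma>)"] PS[OF L H, of \<beta> x \<gamma> "(Pm r \<alpha>)"] PS[OF L H, of \<gamma> x \<alpha> "(Pm r \<beta>)"]
    PP[OF L, of \<alpha> x "(Pm r \<beta>)" "(Pm r \<gamma>)"] PP[OF L, of \<beta> x "(Pm r \<gamma>)" "(Pm r \<alpha>)"] PP[OF L, of \<gamma> x "(Pm r \<alpha>)" "(Pm r \<beta>)"]
    SSS[OF L H, of \<alpha> x \<beta> \<gamma>]
  by simp

lemma dbdb:
  assumes L: "is_lie B" and C: "cybe B r = (\<lambda>_ _ _. 0)"
  shows "dual_br (cobr B r) \<alpha> (dual_br (cobr B r) \<beta> \<gamma>) k = (- pair \<alpha> (B (unitv k) (B (Qm r \<beta>) (Qm r \<gamma>))) + pair \<beta> (B (B (unitv k) (Pm r \<alpha>)) (Qm r \<gamma>)) + pair \<gamma> (B (B (unitv k) (Pm r \<alpha>)) (Pm r \<beta>)))"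
proof -
  let ?x = "unitv k"
  let ?m = "dual_br (cobr B r) \<beta> \<gamma>"
  have 1: "dual_br (cobr B r) \<alpha> ?m k = pair \<alpha> (B ?x (Qm r ?m)) + pair ?m (B ?x (Pm r \<alpha>))"
    by (rule db_unit[OF L])
  have 2: "pair ?m (B ?x (Pm r \<alpha>)) = pair \<beta> (B (B ?x (Pm r \<alpha>)) (Qm r \<gamma>)) + pair \<gamma> (B (B ?x (Pm r \<alpha>)) (Pm r \<beta>))"
    by (rule pair_db[OF L])
  have "pair \<alpha> (B ?x (Qm r ?m)) = pair (cx B \<alpha> ?x) (Qm r ?m)" using L by simp
  also have "\<dots> = pair ?m (Pm r (cx B \<alpha> ?x))" by (simp add: PQ)
  also have "\<dots> = pair \<beta> (B (Pm r (cx B \<alpha> ?x)) (Qm r \<gamma>)) + pair \<gamma> (B (Pm r (cx B \<alpha> ?x)) (Pm r \<beta>))"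
    by (rule pair_db[OF L])
  finally have 3: "pair \<alpha> (B ?x (Qm r ?m)) = pair \<beta> (B (Pm r (cx B \<alpha> ?x)) (Qm r \<gamma>)) + pair \<gamma> (B (Pm r (cx B \<alpha> ?x)) (Pm r \<beta>))" .
  have 4: "pair (cx B \<alpha> ?x) (B (Qm r \<beta>) (Qm r \<gamma>)) + pair \<beta> (B (Pm r (cx B \<alpha> ?x)) (Qm r \<gamma>)) + pair \<gamma> (B (Pm r (cx B \<alpha> ?x)) (Pm r \<beta>)) = 0"
    by (rule cyb[OF L C])
  have 5: "pair (cx B \<alpha> ?x) (B (Qm r \<beta>) (Qm r \<gamma>)) = pair \<alpha> (B ?x (B (Qm r \<beta>) (Qm r \<gamma>)))" using L by simp
  show ?thesis using 1 2 3 4 5 by (simp add: algebra_simps eq_neg_iff_add_eq_0 add.assoc)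
qed

lemma dual_map_pair: "dual_map E \<mu> k = pair \<mu> (E (unitv k))"
  by (simp add: dual_map_def pair_def)

lemma pair_dual[simp]: "lin E \<Longrightarrow> pair (dual_map E \<mu>) z = pair \<mu> (E z)"
  using pair_lin[of E \<mu> z] by (simp add: dual_map_def pair_def mult.commute)

lemma tpr_tmap_E_id: "tpr \<alpha> \<beta> (tmap E id t) = tpr (dual_map E \<alpha>) \<beta> t"
proof -
  have "(\<lambda>b. pair \<beta> (id (unitv b))) = \<beta>" by (rule ext) simp
  moreover have "(\<lambda>a. pair \<alpha> (E (unitv a))) = dual_map E \<alpha>" by (rule ext) (simp add: dual_map_pair)
  ultimately show ?thesis by (simp add: tpr_tmap)
qed

lemma tpr_tmap_id_E: "tpr \<alpha> \<beta> (tmap id E t) = tpr \<alpha> (dual_map E \<beta>) t"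
proof -
  have "(\<lambda>b. pair \<alpha> (id (unitv b))) = \<alpha>" by (rule ext) simp
  moreover have "(\<lambda>a. pair \<beta> (E (unitv a))) = dual_map E \<beta>" by (rule ext) (simp add: dual_map_pair)
  ultimately show ?thesis by (simp add: tpr_tmap)
qed

lemma EQ:
  assumes E: "lin E" and H4: "tsub (tmap id E r) (tmap E id r) = (\<lambda>_ _. 0)"
  shows "E (Qm r \<beta>) = Qm r (dual_map E \<beta>)" and "E (Pm r \<alpha>) = Pm r (dual_map E \<alpha>)"
proof -
  have T: "tpr \<alpha>' \<beta>' (tmap id E r) = tpr \<alpha>' \<beta>' (tmap E id r)" for \<alpha>' \<beta>'
  proof -
    have "tpr \<alpha>' \<beta>' (tsub (tmap id E r) (tmap E id r)) = 0" using H4 by simp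
    then show ?thesis by simp
  qed
  show "E (Qm r \<beta>) = Qm r (dual_map E \<beta>)"
  proof (rule vec_ext2)
    fix \<mu>
    show "pair \<mu> (E (Qm r \<beta>)) = pair \<mu> (Qm r (dual_map E \<beta>))"
      using T[of \<mu> \<beta>] E by (simp only: tpr_tmap_E_id tpr_tmap_id_E) (simp add: tpr_Q)
  qed
  show "E (Pm r \<alpha>) = Pm r (dual_map E \<alpha>)"
  proof (rule vec_ext2)
    fix \<mu>
    show "pair \<mu> (E (Pm r \<alpha>)) = pair \<mu> (Pm r (dual_map E \<alpha>))"
      using T[of \<alpha> \<mu>] E by (simp only: tpr_tmap_E_id tpr_tmap_id_E) (simp add: tpr_P)
  qed
qed

lemma enl_l: assumes "is_enl B E" shows "B (E x) y = E (B x y)"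
proof -
  have L: "is_lie B" and E: "lin E" and N: "\<And>x y. E (B x y) = B x (E y)" using assms by (auto simp: is_enl_def)
  have "B (E x) y = smul (-1) (B y (E x))" by (rule B_anti_vec[OF L])
  also have "\<dots> = smul (-1) (E (B y x))" by (simp add: N)
  also have "\<dots> = E (smul (-1) (B y x))" using E by (simp add: lin_def)
  also have "\<dots> = E (B x y)" using B_anti_vec[OF L, of x y] by simp
  finally show ?thesis .
qed

lemma lin_ten_cobr: assumes L: "is_lie B" shows "lin_ten (cobr B r)"
  unfolding lin_ten_def
proof (intro conjI allI)
  fix x y show "cobr B r (vadd x y) = tadd (cobr B r x) (cobr B r y)"
    by (rule ten_ext) (simp add: tpr_cobr[OF L] L)
next
  fix a x show "cobr B r (smul a x) = (\<lambda>i j. a * cobr B r x i j)"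
    by (rule ten_ext) (simp add: tpr_cobr[OF L] L distrib_left)
qed

lemma flip_cobr:
  assumes L: "is_lie B" and H: "\<forall>x. adact B x (tadd r (flip r)) = (\<lambda>_ _. 0)"
  shows "flip (cobr B r x) = (\<lambda>i j. - cobr B r x i j)"
proof (rule ten_ext)
  fix \<alpha> \<beta>
  show "tpr \<alpha> \<beta> (flip (cobr B r x)) = tpr \<alpha> \<beta> (\<lambda>i j. - cobr B r x i j)"
    using inv0[OF L H, of \<alpha> x \<beta>] L
    by (simp add: tpr_flip tpr_cobr sv_def algebra_simps eq_neg_iff_add_eq_0)
qed

lemma jac2: "is_lie B \<Longrightarrow> pair \<mu> (B (B x y) w) = pair \<mu> (B x (B y w)) - pair \<mu> (B y (B x w))"
proof -
  assume L: "is_lie B"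
  have j: "pair \<mu> (B x (B y w)) + pair \<mu> (B y (B w x)) + pair \<mu> (B w (B x y)) = 0" by (rule pair_jacobi[OF L])
  have 1: "pair \<mu> (B y (B w x)) = - pair \<mu> (B y (B x w))" by (rule anti_in[OF L])
  have 2: "pair \<mu> (B w (B x y)) = - pair \<mu> (B (B x y) w)" by (rule pair_anti[OF L])
  show ?thesis using j unfolding 1 2 by (simp add: algebra_simps eq_neg_iff_add_eq_0)
qed

lemma cocycle:
  assumes L: "is_lie B"
  shows "cobr B r (B x y) = tsub (adact B x (cobr B r y)) (adact B y (cobr B r x))"
proof (rule ten_ext)
  fix \<alpha> \<beta>
  have t1: "pair \<beta> (B y (Pm r (cx B \<alpha> x))) = pair \<alpha> (B x (Qm r (cx B \<beta> y)))" for x y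
  proof -
    have "pair \<beta> (B y (Pm r (cx B \<alpha> x))) = pair (cx B \<beta> y) (Pm r (cx B \<alpha> x))" using L by simp
    also have "\<dots> = pair (cx B \<alpha> x) (Qm r (cx B \<beta> y))" by (rule PQ)
    also have "\<dots> = pair \<alpha> (B x (Qm r (cx B \<beta> y)))" using L by simp
    finally show ?thesis .
  qed
  show "tpr \<alpha> \<beta> (cobr B r (B x y)) = tpr \<alpha> \<beta> (tsub (adact B x (cobr B r y)) (adact B y (cobr B r x)))"
    using L by (simp add: tpr_adact tpr_cobr t1 jac2[OF L])
qed

lemma cobr_E:
  assumes N: "is_enl B E" and H4: "tsub (tmap id E r) (tmap E id r) = (\<lambda>_ _. 0)"
  shows "cobr B r (E x) = tmap E id (cobr B r x)"
proof (rule ten_ext)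
  fix \<alpha> \<beta>
  have L: "is_lie B" and E: "lin E" and NN: "\<And>x y. E (B x y) = B x (E y)" using N by (auto simp: is_enl_def)
  show "tpr \<alpha> \<beta> (cobr B r (E x)) = tpr \<alpha> \<beta> (tmap E id (cobr B r x))"
    using E by (simp add: tpr_tmap_E_id tpr_cobr[OF L] enl_l[OF N] NN EQ[OF E H4])
qed

lemma vadd_apply: "vadd x y k = x k + y k" by (simp add: vadd_def)
lemma smul_apply: "smul a x k = a * x k" by (simp add: smul_def)

lemma db_lin2: assumes L: "is_lie B" shows "lin2 (dual_br (cobr B r))"
  unfolding lin2_def lin_def
proof (intro conjI allI)
  fix \<alpha> \<beta> \<gamma> :: "('a, 'b) vec"
  show "dual_br (cobr B r) \<alpha> (vadd \<beta> \<gamma>) = vadd (dual_br (cobr B r) \<alpha> \<beta>) (dual_br (cobr B r) \<alpha> \<gamma>)"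
    by (rule ext) (simp only: vadd_apply smul_apply, simp add: db_unit[OF L] L algebra_simps)
next
  fix \<alpha> \<beta> :: "('a, 'b) vec" and a
  show "dual_br (cobr B r) \<alpha> (smul a \<beta>) = smul a (dual_br (cobr B r) \<alpha> \<beta>)"
    by (rule ext) (simp only: vadd_apply smul_apply, simp add: db_unit[OF L] L algebra_simps)
next
  fix \<alpha> \<beta> \<gamma> :: "('a, 'b) vec"
  show "dual_br (cobr B r) (vadd \<beta> \<gamma>) \<alpha> = vadd (dual_br (cobr B r) \<beta> \<alpha>) (dual_br (cobr B r) \<gamma> \<alpha>)"
    by (rule ext) (simp only: vadd_apply smul_apply, simp add: db_unit[OF L] L algebra_simps)
next
  fix \<alpha> \<beta> :: "('a, 'b) vec" and a
  show "dual_br (cobr B r) (smul a \<beta>) \<alpha> = smul a (dual_br (cobr B r) \<beta> \<alpha>)"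
    by (rule ext) (simp only: vadd_apply smul_apply, simp add: db_unit[OF L] L algebra_simps)
qed

lemma db_lie:
  fixes B :: "('n::finite, 'k::field_char_0) vec \<Rightarrow> ('n, 'k) vec \<Rightarrow> ('n, 'k) vec"
  assumes L: "is_lie B" and C: "cybe B r = (\<lambda>_ _ _. 0)"
    and H: "\<forall>x. adact B x (tadd r (flip r)) = (\<lambda>_ _. 0)"
  shows "is_lie (dual_br (cobr B r))"
  unfolding is_lie_def
proof (intro conjI allI)
  show "lin2 (dual_br (cobr B r))" by (rule db_lin2[OF L])
next
  fix \<alpha> :: "('n, 'k) vec"
  show "dual_br (cobr B r) \<alpha> \<alpha> = (\<lambda>_. 0)"
  proof (rule ext)
    fix k
    have "pair \<alpha> (B (unitv k) (sv r \<alpha>)) + pair \<alpha> (B (unitv k) (sv r \<alpha>)) = 0" by (rule inv0[OF L H])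
    then have "pair \<alpha> (B (unitv k) (sv r \<alpha>)) = 0" by (simp add: mult_2[symmetric])
    then show "dual_br (cobr B r) \<alpha> \<alpha> k = 0" using L by (simp add: db_unit sv_def add.commute)
  qed
next
  fix \<alpha> \<beta> \<gamma> :: "('n, 'k) vec"
  show "vadd (dual_br (cobr B r) \<alpha> (dual_br (cobr B r) \<beta> \<gamma>))
          (vadd (dual_br (cobr B r) \<beta> (dual_br (cobr B r) \<gamma> \<alpha>)) (dual_br (cobr B r) \<gamma> (dual_br (cobr B r) \<alpha> \<beta>))) = (\<lambda>_. 0)"
  proof (rule ext)
    fix k
    show "vadd (dual_br (cobr B r) \<alpha> (dual_br (cobr B r) \<beta> \<gamma>))
          (vadd (dual_br (cobr B r) \<beta> (dual_br (cobr B r) \<gamma> \<alpha>)) (dual_br (cobr B r) \<gamma> (dual_br (cobr B r) \<alpha> \<beta>))) k = 0"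
      using star[OF L H, of \<alpha> "unitv k" \<beta> \<gamma>] by (simp add: vadd_def dbdb[OF L C] add.assoc)
  qed
qed

lemma dual_E_enl:
  fixes B :: "('n::finite, 'k::field_char_0) vec \<Rightarrow> ('n, 'k) vec \<Rightarrow> ('n, 'k) vec"
  assumes N: "is_enl B E" and C: "cybe B r = (\<lambda>_ _ _. 0)"
    and H4: "tsub (tmap id E r) (tmap E id r) = (\<lambda>_ _. 0)"
    and H: "\<forall>x. adact B x (tadd r (flip r)) = (\<lambda>_ _. 0)"
  shows "is_enl (dual_br (cobr B r)) (dual_map E)"
proof -
  have L: "is_lie B" and E: "lin E" and NN: "\<And>x y. E (B x y) = B x (E y)" using N by (auto simp: is_enl_def)
  have "lin (dual_map E)"
    unfolding lin_def by (auto intro!: ext simp: dual_map_def vadd_def smul_def distrib_left sum.distrib sum_distrib_left mult_ac)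
  moreover have "dual_map E (dual_br (cobr B r) \<alpha> \<beta>) = dual_br (cobr B r) \<alpha> (dual_map E \<beta>)" for \<alpha> \<beta>
  proof (rule ext)
    fix k
    show "dual_map E (dual_br (cobr B r) \<alpha> \<beta>) k = dual_br (cobr B r) \<alpha> (dual_map E \<beta>) k"
      using E by (simp add: dual_map_pair pair_db[OF L] db_unit[OF L] enl_l[OF N] NN EQ[OF E H4])
  qed
  ultimately show ?thesis using db_lie[OF L C H] by (simp add: is_enl_def)
qed

theorem theorem5p6:
  fixes B :: "('n::finite, 'k::field_char_0) vec \<Rightarrow> ('n, 'k) vec \<Rightarrow> ('n, 'k) vec"
    and E :: "('n, 'k) vec \<Rightarrow> ('n, 'k) vec"
    and r :: "('n, 'k) ten2"
  assumes "alg_closed TYPE('k)"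
    and "is_enl B E"
    and "cybe B r = (\<lambda>_ _ _. 0)"
    and "tsub (tmap id E r) (tmap E id r) = (\<lambda>_ _. 0)"
    and "\<forall>x. adact B x (tadd r (flip r)) = (\<lambda>_ _. 0)"
  shows "lie_bialgebra B (cobr B r) \<and> (\<forall>x. cobr B r (E x) = tmap E id (cobr B r x))
         \<and> enl_bialgebra B (cobr B r) E"
proof -
  have L: "is_lie B" using assms(2) by (simp add: is_enl_def)
  have LB: "lie_bialgebra B (cobr B r)"
    unfolding lie_bialgebra_def
    using L lin_ten_cobr[OF L] flip_cobr[OF L assms(5)] db_lie[OF L assms(3) assms(5)] cocycle[OF L]
    by blast
  moreover have "\<forall>x. cobr B r (E x) = tmap E id (cobr B r x)"
    using cobr_E[OF assms(2) assms(4)] by blast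
  moreover have "enl_bialgebra B (cobr B r) E"
    unfolding enl_bialgebra_def
    using LB assms(2) dual_E_enl[OF assms(2) assms(3) assms(4) assms(5)] by blast
  ultimately show ?thesis by blast
qed

end
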